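(* Let $P,Q$ be coprime non-zero integers with $\Delta:=P^2-4Q>0$, let $(U_n)_{n\geq0}$ be the Lucas sequence $U(P,Q)$, and let $\alpha$ be the root of $X^2-PX+Q=0$ of largest absolute value. Then for every positive integer $n$, \[|\alpha|^{\frac{n^2}{4}-\frac{n}{2}-1}\leq \mathrm{lcm}(U_1,U_2,\dots,U_n)\leq |\alpha|^{\frac{n^2}{3}+\frac{7n}{3}-\frac{8}{3}}.\]
   Context: For non-zero integers $P,Q$, the Lucas sequence $U(P,Q)=(U_n)_{n\geq0}$ is defined by $U_0=0$, $U_1=1$, $U_{n+2}=PU_{n+1}-QU_n$ for $n\geq0$. When $\Delta=P^2-4Q>0$, the roots $\alpha,\beta$ of $X^2-PX+Q=0$ are real and labelled so that $|\alpha|>|\beta|$. $\mathrm{lcm}$ denotes the least common positive multiple (of the integers $U_1,\dots,U_n$, which are non-zero under these hypotheses). *)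

theory Defs
  imports Complex_Main
begin

fun lucasU :: "int \<Rightarrow> int \<Rightarrow> nat \<Rightarrow> int" where
  "lucasU P Q 0 = 0"
| "lucasU P Q (Suc 0) = 1"
| "lucasU P Q (Suc (Suc n)) = P * lucasU P Q (Suc n) - Q * lucasU P Q n"

end

theory Submission
  imports Defs "HOL-Computational_Algebra.Primes"
begin



lemma lucas_add:
  "lucasU P Q (m+n+1) = lucasU P Q (m+1) * lucasU P Q (n+1) - Q * lucasU P Q m * lucasU P Q n"
proof -
  have "\<forall>m. lucasU P Q (m+n+1) = lucasU P Q (m+1) * lucasU P Q (n+1) - Q * lucasU P Q m * lucasU P Q n
     \<and> lucasU P Q (m+(n+1)+1) = lucasU P Q (m+1) * lucasU P Q (n+1+1) - Q * lucasU P Q m * lucasU P Q (n+1)"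
  proof (induction n)
    case 0
    then show ?case by (auto simp: algebra_simps)
  next
    case (Suc n)
    show ?case
    proof
      fix m
      have e1: "lucasU P Q (m+n+1) = lucasU P Q (m+1) * lucasU P Q (n+1) - Q * lucasU P Q m * lucasU P Q n"
        and e2: "lucasU P Q (m+(n+1)+1) = lucasU P Q (m+1) * lucasU P Q (n+1+1) - Q * lucasU P Q m * lucasU P Q (n+1)"
        using Suc.IH by blast+
      have r1: "lucasU P Q (m+(Suc n+1)+1) = P * lucasU P Q (m+(n+1)+1) - Q * lucasU P Q (m+n+1)"
        by (simp add: add.commute)
      have r2: "lucasU P Q (Suc n+1+1) = P * lucasU P Q (n+1+1) - Q * lucasU P Q (n+1)"
        by simp
      have A: "lucasU P Q (m+(Suc n+1)+1) = lucasU P Q (m+1) * lucasU P Q (Suc n+1+1) - Q * lucasU P Q m * lucasU P Q (Suc n+1)"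
        unfolding r1 e1 e2 by (simp add: algebra_simps)
      have B: "lucasU P Q (m+Suc n+1) = lucasU P Q (m+1) * lucasU P Q (Suc n+1) - Q * lucasU P Q m * lucasU P Q (Suc n)"
        using e2 by (simp only: Suc_eq_plus1 add.assoc)
      show "lucasU P Q (m+Suc n+1) = lucasU P Q (m+1) * lucasU P Q (Suc n+1) - Q * lucasU P Q m * lucasU P Q (Suc n)
         \<and> lucasU P Q (m+(Suc n+1)+1) = lucasU P Q (m+1) * lucasU P Q (Suc n+1+1) - Q * lucasU P Q m * lucasU P Q (Suc n+1)"
        using A B by blast
    qed
  qed
  then show ?thesis by blast
qed

lemma lucas_modQ: "Q dvd (lucasU P Q (Suc n) - P^n)"
proof (induction n)
  case 0 then show ?case by simp
next
  case (Suc n)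
  have eq: "lucasU P Q (Suc (Suc n)) - P^(Suc n) = P*(lucasU P Q (Suc n) - P^n) - Q * lucasU P Q n"
    by (simp add: algebra_simps)
  have "Q dvd P*(lucasU P Q (Suc n) - P^n) - Q * lucasU P Q n"
    by (rule dvd_diff[OF dvd_mult[OF Suc.IH]]) simp
  then show ?case by (subst eq)
qed

lemma lucas_coprime_Q:
  assumes "coprime P Q" shows "coprime (lucasU P Q (Suc n)) Q"
proof -
  obtain c where c0: "lucasU P Q (Suc n) - P^n = Q*c" using lucas_modQ[where n=n and Q=Q and P=P]
    by (auto elim: dvdE)
  then have c: "lucasU P Q (Suc n) = c*Q + P^n" by (simp add: algebra_simps)
  have "coprime (P^n) Q" using assms by simp
  then have "gcd Q (c*Q + P^n) = 1" by (simp only: gcd_add_mult coprime_iff_gcd_eq_1 gcd.commute)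
  then show ?thesis unfolding c coprime_iff_gcd_eq_1 by (simp add: gcd.commute)
qed

lemma lucas_coprime_succ:
  assumes "coprime P Q" shows "coprime (lucasU P Q n) (lucasU P Q (Suc n))"
proof (induction n)
  case 0 then show ?case by simp
next
  case (Suc n)
  have c1: "coprime (lucasU P Q (Suc n)) (Q * lucasU P Q n)"
    using Suc lucas_coprime_Q[OF assms, of n] by (simp add: coprime_commute)
  have "lucasU P Q (Suc (Suc n)) = P * lucasU P Q (Suc n) + (- (Q * lucasU P Q n))" by simp
  moreover have "coprime (lucasU P Q (Suc n)) (- (Q * lucasU P Q n))" using c1 by simp
  ultimately show ?case unfolding coprime_iff_gcd_eq_1
    by (simp only: gcd_add_mult mult.commute add.commute)
qed

lemma lucas_dvd_mult: "lucasU P Q m dvd lucasU P Q (k*m)"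
proof (induction k)
  case 0 then show ?case by simp
next
  case (Suc k)
  show ?case
  proof (cases m)
    case 0 then show ?thesis by simp
  next
    case (Suc m')
    have "Suc k * m = k*m + m' + 1" using Suc by simp
    then have "lucasU P Q (Suc k * m) = lucasU P Q (k*m + m' + 1)" by (rule arg_cong)
    also have "\<dots> = lucasU P Q (k*m+1) * lucasU P Q (m'+1) - Q * lucasU P Q (k*m) * lucasU P Q m'"
      by (rule lucas_add)
    finally show ?thesis using Suc.IH \<open>m = Suc m'\<close> by simp
  qed
qed

lemma lucas_dvd_gcd:
  assumes "coprime P Q"
  shows "d dvd lucasU P Q m \<Longrightarrow> d dvd lucasU P Q n \<Longrightarrow> d dvd lucasU P Q (gcd m n)"
proof (induction m n rule: gcd_nat_induct)
  case (step m n)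
  obtain q where mq: "m = q*n + m mod n" by (metis div_mult_mod_eq)
  have dq: "d dvd lucasU P Q (q*n)" using step(4) lucas_dvd_mult dvd_trans by blast
  have "d dvd lucasU P Q (m mod n)"
  proof (cases "m mod n")
    case 0 then show ?thesis by simp
  next
    case (Suc r)
    have "lucasU P Q m = lucasU P Q (q*n + r + 1)" using mq Suc by simp
    also have "\<dots> = lucasU P Q (q*n+1) * lucasU P Q (r+1) - Q * lucasU P Q (q*n) * lucasU P Q r"
      by (rule lucas_add)
    finally have "lucasU P Q (q*n+1) * lucasU P Q (r+1) = lucasU P Q m + Q * lucasU P Q (q*n) * lucasU P Q r"
      by simp
    moreover have "d dvd lucasU P Q m + Q * lucasU P Q (q*n) * lucasU P Q r"
      using step(3) dq by (intro dvd_add dvd_mult2 dvd_mult) auto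
    ultimately have "d dvd lucasU P Q (q*n+1) * lucasU P Q (r+1)" by simp
    moreover have "coprime d (lucasU P Q (q*n+1))"
      using coprime_divisors[OF dq dvd_refl lucas_coprime_succ[OF assms, of "q*n"]] by simp
    ultimately show ?thesis using Suc by (simp add: coprime_dvd_mult_right_iff)
  qed
  then have "d dvd lucasU P Q (gcd n (m mod n))" using step by blast
  then show ?case using gcd_red_nat[of m n] by simp
qed simp



lemma card_multiples:
  assumes "(r::nat) > 0" shows "card {i\<in>{1..N}. r dvd i} = N div r"
proof -
  have "{i\<in>{1..N}. r dvd i} = (\<lambda>m. r*m) ` {1..N div r}"
  proof (intro equalityI subsetI)
    fix i assume "i \<in> {i\<in>{1..N}. r dvd i}"
    then obtain m where i: "i = r*m" and "1 \<le> i" "i \<le> N" by auto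
    then have "m \<ge> 1" by (cases m) auto
    moreover have "m \<le> N div r" using i \<open>i \<le> N\<close> assms
      by (metis div_le_mono nonzero_mult_div_cancel_left not_gr0)
    ultimately show "i \<in> (\<lambda>m. r*m) ` {1..N div r}" using i by auto
  next
    fix i assume "i \<in> (\<lambda>m. r*m) ` {1..N div r}"
    then obtain m where m0: "m \<in> {1..N div r}" and i: "i = r*m" by (rule imageE)
    from m0 have m: "1 \<le> m" "m \<le> N div r" by auto
    have "r*m \<le> r*(N div r)" using m by simp
    also have "\<dots> \<le> N" by simp
    finally show "i \<in> {i\<in>{1..N}. r dvd i}" using i m assms by auto
  qed
  moreover have "inj_on (\<lambda>m. r*m) {1..N div r}" using assms by (auto simp: inj_on_def)
  ultimately show ?thesis by (simp add: card_image)
qed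

lemma shift_count:
  assumes "(r::nat) > 0"
  shows "card {i\<in>{1..k}. r dvd (s+i)} \<le> card {i\<in>{1..k}. r dvd i} + 1"
proof -
  have im: "(\<lambda>i. s+i) ` {i\<in>{1..k}. r dvd (s+i)} = {j\<in>{s+1..s+k}. r dvd j}"
  proof (intro equalityI subsetI)
    fix j assume j: "j \<in> {j\<in>{s+1..s+k}. r dvd j}"
    show "j \<in> (\<lambda>i. s+i) ` {i\<in>{1..k}. r dvd (s+i)}"
      by (rule image_eqI[where x="j-s"]) (use j in auto)
  qed auto
  have "inj_on (\<lambda>i. s+i) {i\<in>{1..k}. r dvd (s+i)}" by (auto simp: inj_on_def)
  then have c1: "card {i\<in>{1..k}. r dvd (s+i)} = card {j\<in>{s+1..s+k}. r dvd j}"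
    using im card_image by metis
  have un: "{j\<in>{1..s+k}. r dvd j} = {j\<in>{1..s}. r dvd j} \<union> {j\<in>{s+1..s+k}. r dvd j}" by auto
  have "card {j\<in>{1..s+k}. r dvd j} = card {j\<in>{1..s}. r dvd j} + card {j\<in>{s+1..s+k}. r dvd j}"
    unfolding un by (rule card_Un_disjoint) auto
  then have "card {j\<in>{s+1..s+k}. r dvd j} = (s+k) div r - s div r"
    using card_multiples[OF assms] by simp
  moreover have "(s+k) div r \<le> s div r + k div r + 1"
  proof -
    have "(s mod r + k mod r) div r \<le> 1"
    proof -
      have "s mod r < r" "k mod r < r" using assms by simp_all
      then have "s mod r + k mod r < 2*r" by linarith
      then have "(s mod r + k mod r) div r < 2" by (rule less_mult_imp_div_less)
      then show ?thesis by simp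
    qed
    then show ?thesis using div_add1_eq[of s k r] by simp
  qed
  ultimately show ?thesis using c1 card_multiples[OF assms] by simp
qed

lemma card_le_min: "card {t\<in>{1..T}. t \<le> (x::nat)} = min x T"
proof -
  have "{t\<in>{1..T}. t \<le> x} = {1..min x T}" by auto
  then show ?thesis by simp
qed

lemma sum_levels:
  assumes "finite I"
  shows "(\<Sum>t\<in>{1..T}. card {i\<in>I. t \<le> (f i::nat)}) = (\<Sum>i\<in>I. min (f i) T)"
proof -
  have "(\<Sum>t\<in>{1..T}. card {i\<in>I. t \<le> f i}) = (\<Sum>t\<in>{1..T}. \<Sum>i\<in>I. (if t \<le> f i then 1 else 0))"
    using assms by (simp add: sum.If_cases Int_def)
  also have "\<dots> = (\<Sum>i\<in>I. \<Sum>t\<in>{1..T}. (if t \<le> f i then 1 else 0))" by (rule sum.swap)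
  also have "\<dots> = (\<Sum>i\<in>I. card {t\<in>{1..T}. t \<le> f i})" by (simp add: sum.If_cases Int_def)
  also have "\<dots> = (\<Sum>i\<in>I. min (f i) T)" by (simp only: card_le_min)
  finally show ?thesis .
qed

lemma level_count:
  assumes cop: "coprime P Q"
  shows "card {i\<in>{1..k}. d dvd lucasU P Q (s+i)} \<le> card {i\<in>{1..k}. d dvd lucasU P Q i}
           + (if d dvd Lcm (lucasU P Q ` {1..s+k}) then 1 else 0)"
proof (cases "\<exists>r. r \<ge> 1 \<and> d dvd lucasU P Q r")
  case False
  then have E: "{i\<in>{1..k}. d dvd lucasU P Q (s+i)} = {}" by auto
  show ?thesis unfolding E by simp
next
  case True
  define r0 where "r0 = (LEAST r. r \<ge> 1 \<and> d dvd lucasU P Q r)"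
  have r0: "r0 \<ge> 1" "d dvd lucasU P Q r0" using LeastI_ex[OF True] unfolding r0_def by auto
  have r0min: "\<And>r. r \<ge> 1 \<Longrightarrow> d dvd lucasU P Q r \<Longrightarrow> r0 \<le> r"
    unfolding r0_def by (rule Least_le) simp
  have char: "d dvd lucasU P Q i \<longleftrightarrow> r0 dvd i" if "i \<ge> 1" for i
  proof
    assume "d dvd lucasU P Q i"
    then have "d dvd lucasU P Q (gcd i r0)" using lucas_dvd_gcd[OF cop] r0 by blast
    moreover have "gcd i r0 \<ge> 1" using that by (simp add: Suc_le_eq)
    ultimately have "r0 \<le> gcd i r0" using r0min by blast
    moreover have "gcd i r0 \<le> r0" using r0 by (simp add: gcd_le2_nat)
    ultimately have "gcd i r0 = r0" by simp
    then show "r0 dvd i" by (metis gcd_dvd1)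
  next
    assume "r0 dvd i"
    then obtain q where "i = r0*q" by (rule dvdE)
    then have "i = q*r0" by simp
    then show "d dvd lucasU P Q i" using lucas_dvd_mult[of P Q r0 q] r0 dvd_trans by metis
  qed
  have e1: "{i\<in>{1..k}. d dvd lucasU P Q (s+i)} = {i\<in>{1..k}. r0 dvd (s+i)}" using char by auto
  have e2: "{i\<in>{1..k}. d dvd lucasU P Q i} = {i\<in>{1..k}. r0 dvd i}" using char by auto
  have sc: "card {i\<in>{1..k}. r0 dvd (s+i)} \<le> card {i\<in>{1..k}. r0 dvd i} + 1"
    using shift_count r0 by simp
  show ?thesis
  proof (cases "card {i\<in>{1..k}. d dvd lucasU P Q (s+i)} \<le> card {i\<in>{1..k}. d dvd lucasU P Q i}")
    case True then show ?thesis by simp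
  next
    case False
    then have "card {i\<in>{1..k}. d dvd lucasU P Q (s+i)} \<noteq> 0" by linarith
    then have "{i\<in>{1..k}. d dvd lucasU P Q (s+i)} \<noteq> {}" by (intro notI) (simp only: card.empty)
    then obtain i where i: "i \<in> {1..k}" "d dvd lucasU P Q (s+i)" by blast
    then have "lucasU P Q (s+i) dvd Lcm (lucasU P Q ` {1..s+k})" by (intro dvd_Lcm) auto
    then have "d dvd Lcm (lucasU P Q ` {1..s+k})" using i dvd_trans by blast
    then have ifv: "(if d dvd Lcm (lucasU P Q ` {1..s+k}) then 1 else 0) = (1::nat)" by simp
    show ?thesis unfolding ifv e1 e2 by (rule sc)
  qed
qed




lemma sum_if_le_min: "(\<Sum>t\<in>{1..T}. (if t \<le> (x::nat) then 1 else 0::nat)) = min x T"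
proof -
  have "(\<Sum>t\<in>{1..T}. (if t \<le> x then 1 else 0::nat)) = card {t\<in>{1..T}. t \<le> x}"
    by (simp add: sum.If_cases Int_def)
  then show ?thesis by (simp only: card_le_min)
qed

lemma lucas_binom_dvd:
  assumes cop: "coprime P Q" and nz: "\<And>i. i \<ge> 1 \<Longrightarrow> lucasU P Q i \<noteq> 0"
  shows "(\<Prod>i\<in>{1..k}. lucasU P Q (s+i)) dvd Lcm (lucasU P Q ` {1..s+k}) * (\<Prod>i\<in>{1..k}. lucasU P Q i)"
proof -
  define A where "A = (\<Prod>i\<in>{1..k}. lucasU P Q (s+i))"
  define B where "B = (\<Prod>i\<in>{1..k}. lucasU P Q i)"
  define L where "L = Lcm (lucasU P Q ` {1..s+k})"
  have A0: "A \<noteq> 0" unfolding A_def using nz by (simp add: prod_zero_iff)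
  have B0: "B \<noteq> 0" unfolding B_def using nz by (simp add: prod_zero_iff)
  have L0: "L \<noteq> 0" unfolding L_def using nz by (subst Lcm_0_iff) auto
  have "A dvd L * B"
  proof (rule multiplicity_le_imp_dvd[OF A0])
    fix p :: int assume p: "prime p"
    then have pe: "prime_elem p" by (rule prime_imp_prime_elem)
    define v where "v x = multiplicity p x" for x :: int
    have vA: "v A = (\<Sum>i\<in>{1..k}. v (lucasU P Q (s+i)))"
      unfolding v_def A_def using nz by (intro prime_elem_multiplicity_prod_distrib[OF pe]) auto
    have vB: "v B = (\<Sum>i\<in>{1..k}. v (lucasU P Q i))"
      unfolding v_def B_def using nz by (intro prime_elem_multiplicity_prod_distrib[OF pe]) auto
    have vLB: "v (L*B) = v L + v B"
      unfolding v_def using L0 B0 by (rule prime_elem_multiplicity_mult_distrib[OF pe])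
    define T where "T = v A"
    have le: "v (lucasU P Q (s+i)) \<le> T" if "i \<in> {1..k}" for i
      unfolding T_def v_def
      by (rule dvd_imp_multiplicity_le[OF _ A0]) (unfold A_def, rule dvd_prodI, use that in auto)
    have pnu: "\<not> is_unit p" using p not_prime_unit by blast
    have lev: "t \<le> v x \<longleftrightarrow> p^t dvd x" if "x \<noteq> 0" for t x
      unfolding v_def using that pnu by (intro power_dvd_iff_le_multiplicity[symmetric])
    have "v A = (\<Sum>i\<in>{1..k}. min (v (lucasU P Q (s+i))) T)"
      unfolding vA by (intro sum.cong refl) (simp add: le min_absorb1)
    also have "\<dots> = (\<Sum>t\<in>{1..T}. card {i\<in>{1..k}. t \<le> v (lucasU P Q (s+i))})"
      by (rule sum_levels[symmetric]) simp
    also have "\<dots> \<le> (\<Sum>t\<in>{1..T}. card {i\<in>{1..k}. t \<le> v (lucasU P Q i)} + (if t \<le> v L then 1 else 0))"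
    proof (rule sum_mono)
      fix t assume "t \<in> {1..T}"
      have "card {i\<in>{1..k}. p^t dvd lucasU P Q (s+i)} \<le> card {i\<in>{1..k}. p^t dvd lucasU P Q i}
           + (if p^t dvd L then 1 else 0)"
        unfolding L_def by (rule level_count[OF cop])
      moreover have "{i\<in>{1..k}. t \<le> v (lucasU P Q (s+i))} = {i\<in>{1..k}. p^t dvd lucasU P Q (s+i)}"
        using lev nz by auto
      moreover have "{i\<in>{1..k}. t \<le> v (lucasU P Q i)} = {i\<in>{1..k}. p^t dvd lucasU P Q i}"
        using lev nz by auto
      moreover have "(t \<le> v L) = (p^t dvd L)" using lev L0 by blast
      ultimately show "card {i\<in>{1..k}. t \<le> v (lucasU P Q (s+i))} \<le> card {i\<in>{1..k}. t \<le> v (lucasU P Q i)} + (if t \<le> v L then 1 else 0)"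
        by simp
    qed
    also have "\<dots> = (\<Sum>t\<in>{1..T}. card {i\<in>{1..k}. t \<le> v (lucasU P Q i)}) + (\<Sum>t\<in>{1..T}. (if t \<le> v L then 1 else 0))"
      by (rule sum.distrib)
    also have "\<dots> = (\<Sum>i\<in>{1..k}. min (v (lucasU P Q i)) T) + min (v L) T"
      by (simp only: sum_levels[of "{1..k}"] finite_atLeastAtMost sum_if_le_min)
    also have "\<dots> \<le> v B + v L"
      unfolding vB by (intro add_mono sum_mono) auto
    finally show "multiplicity p A \<le> multiplicity p (L*B)" using vLB unfolding v_def by simp
  qed
  then show ?thesis unfolding A_def B_def L_def .
qed




lemma B1:
  fixes a b :: real assumes ab: "b + 1 \<le> a" and b0: "0 \<le> b" and m: "m \<ge> 1"
  shows "a^m + b^m \<le> a^(m+1)"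
proof -
  obtain k where k: "m = Suc k" using m by (cases m) auto
  define X where "X = a^k"
  have X0: "0 \<le> X" unfolding X_def using ab b0 by simp
  have "b^m = b * b^k" using k by simp
  also have "\<dots> \<le> b * X" unfolding X_def using ab b0 by (intro mult_left_mono power_mono) auto
  also have "\<dots> \<le> (a-1) * X" using ab X0 by (intro mult_right_mono) auto
  finally have h1: "b^m \<le> a*X - X" by (simp add: algebra_simps)
  have "0 \<le> (a-1)^2 * X" using X0 by simp
  then have h2: "0 \<le> a*(a*X) - 2*(a*X) + X" by (simp add: algebra_simps power2_eq_square)
  have "a^m = a*X" "a^(m+1) = a*(a*X)" unfolding X_def using k by simp_all
  then show ?thesis using h1 h2 by linarith
qed

lemma B2:
  fixes a b :: real assumes ab: "b + 1 \<le> a" and b0: "0 \<le> b" and m: "m \<ge> 1"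
  shows "a^(2*m) + a^m * b^m + b^(2*m) \<le> a^(2*m+1)"
proof -
  obtain k where k: "m = Suc k" using m by (cases m) auto
  define A where "A = a^m"
  define y where "y = b^m"
  have a1: "1 \<le> a" using ab b0 by simp
  have A0: "0 \<le> A" unfolding A_def using a1 by simp
  have y0: "0 \<le> y" unfolding y_def using b0 by simp
  have "b^m = b * b^k" using k by simp
  also have "\<dots> \<le> b * a^k" using ab b0 by (intro mult_left_mono power_mono) auto
  also have "\<dots> \<le> (a-1) * a^k" using ab a1 by (intro mult_right_mono) auto
  finally have h: "y \<le> (a-1)*a^k" unfolding y_def .
  have "a*y \<le> a*((a-1)*a^k)" using h a1 by (intro mult_left_mono) auto
  then have ay: "a*y \<le> (a-1)*A" unfolding A_def using k by (simp add: algebra_simps)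
  have ay0: "0 \<le> a*y" using a1 y0 by simp
  have t1: "a*A*(a*y) \<le> a*A*((a-1)*A)" using ay a1 A0 by (intro mult_left_mono) auto
  have t2: "(a*y)*(a*y) \<le> ((a-1)*A)*((a-1)*A)"
    by (rule mult_mono[OF ay ay]) (use ay0 ay in linarith)+
  have t3: "0 \<le> (a-1)^3 * (A*A)" using a1 A0 by simp
  have "a*a*(A*A + A*y + y*y) \<le> a*a*(a*(A*A))"
    using t1 t2 t3 by (simp add: algebra_simps power2_eq_square power3_eq_cube)
  then have "A*A + A*y + y*y \<le> a*(A*A)" using a1 by (simp add: mult_le_cancel_left)
  moreover have "a^(2*m) = A*A" "a^m*b^m = A*y" "b^(2*m) = y*y" "a^(2*m+1) = a*(A*A)"
    unfolding A_def y_def by (simp_all add: power_mult power2_eq_square mult.commute[of 2])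
  ultimately show ?thesis by simp
qed

lemma B4:
  fixes a b :: real assumes ab: "b + 1 \<le> a" and b0: "0 \<le> b" and j: "j \<ge> 1" and s: "s \<ge> 1"
  shows "a^(s-1) * (a^j + b^j) \<le> a^(j+s) - b^(j+s)"
proof -
  obtain j' where j': "j = Suc j'" using j by (cases j) auto
  obtain s' where s': "s = Suc s'" using s by (cases s) auto
  define X where "X = a^s'"
  define Y where "Y = b^s'"
  define Z where "Z = a^j'"
  define W where "W = b^j'"
  have a1: "1 \<le> a" using ab b0 by simp
  have X0: "0 \<le> X" "0 \<le> Y" "0 \<le> Z" "0 \<le> W" unfolding X_def Y_def Z_def W_def using a1 b0 by simp_all
  have YX: "Y \<le> X" unfolding X_def Y_def using ab b0 by (intro power_mono) auto
  have WZ: "W \<le> Z" unfolding Z_def W_def using ab b0 by (intro power_mono) auto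
  have XZ0: "0 \<le> X*Z" using X0 by simp
  have s1: "X*Z*a*(1+b) \<le> X*Z*a*a" using ab XZ0 a1 by (intro mult_left_mono) auto
  have s2: "X*Z*(1+b)*b \<le> X*Z*a*b" using ab XZ0 b0 by (intro mult_right_mono mult_left_mono) auto
  have s3: "X*W*b \<le> X*Z*b" using WZ X0 b0 by (intro mult_right_mono mult_left_mono) auto
  have s4: "Y*W*(b*b) \<le> X*Z*(b*b)" using YX WZ X0 b0 by (intro mult_right_mono mult_mono) auto
  have "X*(a*Z + b*W) \<le> X*Z*(a*a) - Y*W*(b*b)"
    using s1 s2 s3 s4 by (simp add: algebra_simps; linarith)
  moreover have "a^(s-1) = X" "a^j = a*Z" "b^j = b*W" "a^(j+s) = X*Z*(a*a)" "b^(j+s) = Y*W*(b*b)"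
    unfolding X_def Y_def Z_def W_def using j' s' by (simp_all add: power_add algebra_simps)
  ultimately show ?thesis by simp
qed



definition ee :: "nat \<Rightarrow> nat" where
  "ee k = (if k mod 6 = 0 then k div 3 + 1 else if k mod 2 = 0 then k div 2 + 1
           else if k mod 3 = 0 then 2*(k div 3) + 1 else k + 1)"

fun EE :: "nat \<Rightarrow> nat" where
  "EE 0 = 0"
| "EE (Suc n) = (if n = 0 then 0 else EE n + ee (Suc n))"

lemma eeq: "ee (6*q+c) = (if c mod 6 = 0 then 2*q + c div 3 + 1 else if c mod 2 = 0 then 3*q + c div 2 + 1
           else if c mod 3 = 0 then 4*q + 2*(c div 3) + 1 else 6*q+c + 1)"
proof -
  have a: "(6*q+c) mod 6 = c mod 6" by simp
  have b: "(6*q+c) mod 2 = c mod 2" using mod_mult_self4[of 2 "3*q" c] by (simp add: mult.assoc)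
  have c: "(6*q+c) mod 3 = c mod 3" using mod_mult_self4[of 3 "2*q" c] by (simp add: mult.assoc)
  have d: "(6*q+c) div 3 = 2*q + c div 3" using div_mult_self4[of 3 "2*q" c] by (simp add: mult.assoc)
  have e: "(6*q+c) div 2 = 3*q + c div 2" using div_mult_self4[of 2 "3*q" c] by (simp add: mult.assoc)
  show ?thesis unfolding ee_def a b c d e by simp
qed
lemma ee6: "ee (6*q+1) = 6*q+2" "ee (6*q+2) = 3*q+2" "ee (6*q+3) = 4*q+3"
  "ee (6*q+4) = 3*q+3" "ee (6*q+5) = 6*q+6" "ee (6*q+6) = 2*q+3"
  "ee (6*q+7) = 6*q+8" "ee (6*q+8) = 3*q+5" "ee (6*q+9) = 4*q+7"
  "ee (6*q+10) = 3*q+6" "ee (6*q+11) = 6*q+12"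
  by (simp_all only: eeq) simp_all

lemma six_sum: "3*(ee (m+1) + ee (m+2) + ee (m+3) + ee (m+4) + ee (m+5) + ee (m+6)) \<le> 12*m+78"
proof -
  obtain q r where m: "m = 6*q + r" and r: "r < 6" by (metis div_mult_mod_eq mod_less_divisor zero_less_numeral mult.commute)
  consider "r=0" | "r=1" | "r=2" | "r=3" | "r=4" | "r=5" using r by linarith
  then show ?thesis
  proof cases
    case 1
    have h: "m+1 = 6*q+1" "m+2 = 6*q+2" "m+3 = 6*q+3" "m+4 = 6*q+4" "m+5 = 6*q+5" "m+6 = 6*q+6"
      using m 1 by simp_all
    show ?thesis unfolding h ee6 using m 1 by simp
  next
    case 2
    have h: "m+1 = 6*q+2" "m+2 = 6*q+3" "m+3 = 6*q+4" "m+4 = 6*q+5" "m+5 = 6*q+6" "m+6 = 6*q+7"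
      using m 2 by simp_all
    show ?thesis unfolding h ee6 using m 2 by simp
  next
    case 3
    have h: "m+1 = 6*q+3" "m+2 = 6*q+4" "m+3 = 6*q+5" "m+4 = 6*q+6" "m+5 = 6*q+7" "m+6 = 6*q+8"
      using m 3 by simp_all
    show ?thesis unfolding h ee6 using m 3 by simp
  next
    case 4
    have h: "m+1 = 6*q+4" "m+2 = 6*q+5" "m+3 = 6*q+6" "m+4 = 6*q+7" "m+5 = 6*q+8" "m+6 = 6*q+9"
      using m 4 by simp_all
    show ?thesis unfolding h ee6 using m 4 by simp
  next
    case 5
    have h: "m+1 = 6*q+5" "m+2 = 6*q+6" "m+3 = 6*q+7" "m+4 = 6*q+8" "m+5 = 6*q+9" "m+6 = 6*q+10"
      using m 5 by simp_all
    show ?thesis unfolding h ee6 using m 5 by simp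
  next
    case 6
    have h: "m+1 = 6*q+6" "m+2 = 6*q+7" "m+3 = 6*q+8" "m+4 = 6*q+9" "m+5 = 6*q+10" "m+6 = 6*q+11"
      using m 6 by simp_all
    show ?thesis unfolding h ee6 using m 6 by simp
  qed
qed

lemma EE_step: "n \<ge> 1 \<Longrightarrow> EE (n+1) = EE n + ee (n+1)" by simp

lemma EE_vals: "EE 1 = 0" "EE 2 = 2" "EE 3 = 5" "EE 4 = 8" "EE 5 = 14" "EE 6 = 17"
proof -
  show e1: "EE 1 = 0" by simp
  have h: "(2::nat) = Suc 1" "(3::nat) = Suc 2" "(4::nat) = Suc 3" "(5::nat) = Suc 4" "(6::nat) = Suc 5" by simp_all
  have e2: "EE 2 = 2" unfolding h(1) EE.simps(2) using e1 by (simp add: ee_def)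
  have e3: "EE 3 = 5" unfolding h(2) EE.simps(2) using e2 by (simp add: ee_def)
  have e4: "EE 4 = 8" unfolding h(3) EE.simps(2) using e3 by (simp add: ee_def)
  have e5: "EE 5 = 14" unfolding h(4) EE.simps(2) using e4 by (simp add: ee_def)
  have e6: "EE 6 = 17" unfolding h(5) EE.simps(2) using e5 by (simp add: ee_def)
  show "EE 2 = 2" "EE 3 = 5" "EE 4 = 8" "EE 5 = 14" "EE 6 = 17" by fact+
qed

lemma EE_six: "m \<ge> 1 \<Longrightarrow> EE (m+6) = EE m + (ee (m+1) + ee (m+2) + ee (m+3) + ee (m+4) + ee (m+5) + ee (m+6))"
proof -
  assume m: "m \<ge> 1"
  have h: "m+1 = Suc m" "m+2 = Suc (m+1)" "m+3 = Suc (m+2)" "m+4 = Suc (m+3)" "m+5 = Suc (m+4)" "m+6 = Suc (m+5)"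
    by simp_all
  have "EE (m+1) = EE m + ee (m+1)" unfolding h(1) EE.simps(2) using m by simp
  moreover have "EE (m+2) = EE (m+1) + ee (m+2)" unfolding h(2) EE.simps(2) by simp
  moreover have "EE (m+3) = EE (m+2) + ee (m+3)" unfolding h(3) EE.simps(2) by simp
  moreover have "EE (m+4) = EE (m+3) + ee (m+4)" unfolding h(4) EE.simps(2) by simp
  moreover have "EE (m+5) = EE (m+4) + ee (m+5)" unfolding h(5) EE.simps(2) by simp
  moreover have "EE (m+6) = EE (m+5) + ee (m+6)" unfolding h(6) EE.simps(2) by simp
  ultimately show ?thesis by linarith
qed

lemma EE_bound: "n \<ge> 1 \<Longrightarrow> 3 * EE n + 8 \<le> n^2 + 7*n"
proof (induction n rule: less_induct)
  case (less n)
  show ?case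
  proof (cases "n \<le> 6")
    case True
    then consider "n=1" | "n=2" | "n=3" | "n=4" | "n=5" | "n=6" using less.prems by linarith
    then show ?thesis
    proof cases
      case 1 then show ?thesis unfolding 1 EE_vals by simp
    next
      case 2 then show ?thesis unfolding 2 EE_vals by simp
    next
      case 3 then show ?thesis unfolding 3 EE_vals by simp
    next
      case 4 then show ?thesis unfolding 4 EE_vals by simp
    next
      case 5 then show ?thesis unfolding 5 EE_vals by simp
    next
      case 6 then show ?thesis unfolding 6 EE_vals by simp
    qed
  next
    case False
    define m where "m = n - 6"
    have m: "n = m + 6" "m \<ge> 1" using False unfolding m_def by auto
    have IH: "3 * EE m + 8 \<le> m^2 + 7*m" using less.IH[of m] m by simp
    define S where "S = ee (m+1) + ee (m+2) + ee (m+3) + ee (m+4) + ee (m+5) + ee (m+6)"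
    have e: "EE n = EE m + S" unfolding S_def m(1) by (rule EE_six[OF m(2)])
    have p: "n^2 + 7*n = m^2 + 7*m + 12*m + 78" unfolding m(1) by (simp add: power2_eq_square algebra_simps)
    have ss: "3*S \<le> 12*m+78" unfolding S_def by (rule six_sum)
    have "3 * EE m + 8 + 3*S \<le> m^2 + 7*m + (12*m + 78)" by (rule add_mono[OF IH ss])
    then show ?thesis unfolding e p by (simp add: distrib_left add_ac)
  qed
qed



locale lucas_setup =
  fixes P Q :: int and \<alpha> :: real
  assumes P0: "P \<noteq> 0" and Q0: "Q \<noteq> 0" and cop: "coprime P Q" and D: "P^2 - 4*Q > 0"
    and root: "\<alpha>^2 - of_int P * \<alpha> + of_int Q = 0"
    and maxr: "\<And>x::real. x^2 - of_int P * x + of_int Q = 0 \<Longrightarrow> \<bar>x\<bar> \<le> \<bar>\<alpha>\<bar>"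
begin

definition "\<beta> = of_int P - \<alpha>"

lemma sumP: "\<alpha> + \<beta> = of_int P" by (simp add: \<beta>_def)

lemma prodQ: "\<alpha> * \<beta> = of_int Q"
proof -
  have "\<alpha> * \<beta> = of_int Q - (\<alpha>^2 - of_int P * \<alpha> + of_int Q)"
    by (simp add: \<beta>_def power2_eq_square algebra_simps)
  then show ?thesis using root by simp
qed

lemma broot: "\<beta>^2 - of_int P * \<beta> + of_int Q = 0"
proof -
  have "\<beta>^2 - of_int P * \<beta> + of_int Q = \<alpha>^2 - of_int P * \<alpha> + of_int Q"
    by (simp add: \<beta>_def power2_eq_square algebra_simps)
  then show ?thesis using root by simp
qed

lemma diffsq: "(\<alpha> - \<beta>)^2 = of_int (P^2 - 4*Q)"
proof -
  have "(\<alpha> - \<beta>)^2 = (\<alpha> + \<beta>)^2 - 4*(\<alpha>*\<beta>)" by (simp add: power2_eq_square algebra_simps)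
  then show ?thesis by (simp add: sumP prodQ)
qed

lemma d1: "1 \<le> \<bar>\<alpha> - \<beta>\<bar>"
proof -
  have "1 \<le> P^2 - 4*Q" using D by simp
  then have "(1::real) \<le> of_int (P^2 - 4*Q)" by (metis of_int_1 of_int_le_iff)
  then have "1\<^sup>2 \<le> (\<alpha> - \<beta>)^2" using diffsq by simp
  then show ?thesis using abs_le_square_iff[of 1 "\<alpha> - \<beta>"] by simp
qed

lemma s1: "1 \<le> \<bar>\<alpha> + \<beta>\<bar>"
proof -
  have "1 \<le> \<bar>P\<bar>" using P0 by simp
  then have "(1::real) \<le> \<bar>of_int P\<bar>" by (metis of_int_1_le_iff of_int_abs)
  then show ?thesis by (simp add: sumP)
qed

lemma blt: "\<bar>\<beta>\<bar> < \<bar>\<alpha>\<bar>"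
proof -
  have le: "\<bar>\<beta>\<bar> \<le> \<bar>\<alpha>\<bar>" using maxr[OF broot] .
  have "\<bar>\<beta>\<bar> \<noteq> \<bar>\<alpha>\<bar>"
  proof
    assume "\<bar>\<beta>\<bar> = \<bar>\<alpha>\<bar>"
    then have "\<beta> = \<alpha> \<or> \<beta> = -\<alpha>" by (auto simp: abs_if split: if_splits)
    then show False using d1 s1 by auto
  qed
  then show ?thesis using le by simp
qed

lemma b0: "0 < \<bar>\<beta>\<bar>"
proof -
  have "\<alpha> * \<beta> \<noteq> 0" using prodQ Q0 by simp
  then show ?thesis by simp
qed

lemma gap: "\<bar>\<beta>\<bar> + 1 \<le> \<bar>\<alpha>\<bar>"
proof (cases "0 \<le> \<alpha>")
  case True
  show ?thesis
  proof (cases "0 \<le> \<beta>")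
    case True then show ?thesis using \<open>0 \<le> \<alpha>\<close> d1 blt by simp
  next
    case False then show ?thesis using \<open>0 \<le> \<alpha>\<close> s1 blt by simp
  qed
next
  case False
  show ?thesis
  proof (cases "0 \<le> \<beta>")
    case True then show ?thesis using \<open>\<not> 0 \<le> \<alpha>\<close> s1 blt by simp
  next
    case False then show ?thesis using \<open>\<not> 0 \<le> \<alpha>\<close> d1 blt by simp
  qed
qed

lemma a1: "1 < \<bar>\<alpha>\<bar>" using gap b0 by simp

lemma closed: "real_of_int (lucasU P Q n) * (\<alpha> - \<beta>) = \<alpha>^n - \<beta>^n"
proof (induction n rule: less_induct)
  case (less n)
  consider "n = 0" | "n = Suc 0" | m where "n = Suc (Suc m)" by (metis not0_implies_Suc)
  then show ?case
  proof cases
    case 3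
    have IH1: "real_of_int (lucasU P Q (Suc m)) * (\<alpha> - \<beta>) = \<alpha>^(Suc m) - \<beta>^(Suc m)"
      using less.IH 3 by simp
    have IH0: "real_of_int (lucasU P Q m) * (\<alpha> - \<beta>) = \<alpha>^m - \<beta>^m"
      using less.IH 3 by simp
    have "real_of_int (lucasU P Q n) * (\<alpha> - \<beta>) =
      (\<alpha>+\<beta>) * (real_of_int (lucasU P Q (Suc m)) * (\<alpha> - \<beta>)) - (\<alpha>*\<beta>) * (real_of_int (lucasU P Q m) * (\<alpha> - \<beta>))"
      unfolding 3 sumP prodQ by (simp add: algebra_simps)
    also have "\<dots> = \<alpha>^n - \<beta>^n" unfolding IH1 IH0 3 by (simp add: algebra_simps)
    finally show ?thesis .
  qed simp_all
qed

lemma ne: "\<alpha> - \<beta> \<noteq> 0" using d1 by auto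

lemma u_eq: "real_of_int (lucasU P Q n) = (\<alpha>^n - \<beta>^n) / (\<alpha> - \<beta>)"
  using closed[of n] ne by (simp add: field_simps)

lemma u_abs: "\<bar>real_of_int (lucasU P Q n)\<bar> * \<bar>\<alpha> - \<beta>\<bar> = \<bar>\<alpha>^n - \<beta>^n\<bar>"
  using closed[of n] by (metis abs_mult)

lemma pow_diff_lower: "\<bar>\<alpha>\<bar>^n - \<bar>\<beta>\<bar>^n \<le> \<bar>\<alpha>^n - \<beta>^n\<bar>"
  using abs_triangle_ineq2[of "\<alpha>^n" "\<beta>^n"] by (simp add: power_abs)

lemma pow_diff_upper: "\<bar>\<alpha>^n - \<beta>^n\<bar> \<le> \<bar>\<alpha>\<bar>^n + \<bar>\<beta>\<bar>^n"
  using abs_triangle_ineq4[of "\<alpha>^n" "\<beta>^n"] by (simp add: power_abs)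

lemma nz: "n \<ge> 1 \<Longrightarrow> lucasU P Q n \<noteq> 0"
proof
  assume n: "n \<ge> 1" and z: "lucasU P Q n = 0"
  have "\<bar>\<beta>\<bar>^n < \<bar>\<alpha>\<bar>^n" using blt n by (intro power_strict_mono) auto
  then have "0 < \<bar>\<alpha>^n - \<beta>^n\<bar>" using pow_diff_lower[of n] by linarith
  then show False using u_abs[of n] z by simp
qed

lemma upper_u: "n \<ge> 1 \<Longrightarrow> \<bar>real_of_int (lucasU P Q n)\<bar> \<le> \<bar>\<alpha>\<bar>^(n+1)"
proof -
  assume n: "n \<ge> 1"
  have "\<bar>real_of_int (lucasU P Q n)\<bar> \<le> \<bar>real_of_int (lucasU P Q n)\<bar> * \<bar>\<alpha> - \<beta>\<bar>"
    using d1 by (simp add: mult_le_cancel_left1)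
  also have "\<dots> \<le> \<bar>\<alpha>\<bar>^n + \<bar>\<beta>\<bar>^n" using u_abs pow_diff_upper by simp
  also have "\<dots> \<le> \<bar>\<alpha>\<bar>^(n+1)" using B1[OF gap _ n] by simp
  finally show ?thesis .
qed

lemma lower_ratio:
  assumes j: "j \<ge> 1" and s: "s \<ge> 1"
  shows "\<bar>\<alpha>\<bar>^(s-1) * \<bar>real_of_int (lucasU P Q j)\<bar> \<le> \<bar>real_of_int (lucasU P Q (s+j))\<bar>"
proof -
  have "\<bar>\<alpha>\<bar>^(s-1) * \<bar>real_of_int (lucasU P Q j)\<bar> * \<bar>\<alpha> - \<beta>\<bar> = \<bar>\<alpha>\<bar>^(s-1) * \<bar>\<alpha>^j - \<beta>^j\<bar>"
    using u_abs[of j] by simp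
  also have "\<dots> \<le> \<bar>\<alpha>\<bar>^(s-1) * (\<bar>\<alpha>\<bar>^j + \<bar>\<beta>\<bar>^j)"
    using pow_diff_upper by (intro mult_left_mono) auto
  also have "\<dots> \<le> \<bar>\<alpha>\<bar>^(j+s) - \<bar>\<beta>\<bar>^(j+s)" using B4[OF gap _ j s] by simp
  also have "\<dots> \<le> \<bar>\<alpha>^(s+j) - \<beta>^(s+j)\<bar>" using pow_diff_lower[of "s+j"] by (simp add: add.commute)
  also have "\<dots> = \<bar>real_of_int (lucasU P Q (s+j))\<bar> * \<bar>\<alpha> - \<beta>\<bar>" using u_abs by simp
  finally show ?thesis using ne by simp
qed

lemma pw: "x^(k*m) = (x^m)^k" for x :: real by (simp add: power_mult[symmetric] mult.commute)

lemma dbl: "real_of_int (lucasU P Q (2*m)) = real_of_int (lucasU P Q m) * (\<alpha>^m + \<beta>^m)"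
proof -
  have "real_of_int (lucasU P Q (2*m)) * (\<alpha> - \<beta>) = real_of_int (lucasU P Q m) * (\<alpha>^m + \<beta>^m) * (\<alpha> - \<beta>)"
  proof -
    have "real_of_int (lucasU P Q m) * (\<alpha>^m + \<beta>^m) * (\<alpha> - \<beta>) = (real_of_int (lucasU P Q m) * (\<alpha> - \<beta>)) * (\<alpha>^m + \<beta>^m)"
      by (simp only: mult_ac)
    also have "\<dots> = (\<alpha>^m - \<beta>^m) * (\<alpha>^m + \<beta>^m)" by (simp only: closed)
    also have "\<dots> = (\<alpha>^m)^2 - (\<beta>^m)^2" by (simp add: power2_eq_square algebra_simps)
    also have "\<dots> = real_of_int (lucasU P Q (2*m)) * (\<alpha> - \<beta>)" using closed[of "2*m"] pw[of _ 2 m] by simp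
    finally show ?thesis by (rule sym)
  qed
  then show ?thesis using ne by (metis mult_cancel_right)
qed

lemma trp: "real_of_int (lucasU P Q (3*m)) = real_of_int (lucasU P Q m) * (\<alpha>^(2*m) + \<alpha>^m*\<beta>^m + \<beta>^(2*m))"
proof -
  define X where "X = \<alpha>^m"
  define Y where "Y = \<beta>^m"
  have x: "\<alpha>^(2*m) = X^2" "\<alpha>^(3*m) = X^3" "\<beta>^(2*m) = Y^2" "\<beta>^(3*m) = Y^3"
    unfolding X_def Y_def by (simp_all add: pw)
  have "real_of_int (lucasU P Q (3*m)) * (\<alpha> - \<beta>) = real_of_int (lucasU P Q m) * (\<alpha>^(2*m) + \<alpha>^m*\<beta>^m + \<beta>^(2*m)) * (\<alpha> - \<beta>)"
  proof -
    have "real_of_int (lucasU P Q m) * (\<alpha>^(2*m) + \<alpha>^m*\<beta>^m + \<beta>^(2*m)) * (\<alpha> - \<beta>) = (real_of_int (lucasU P Q m) * (\<alpha> - \<beta>)) * (\<alpha>^(2*m) + \<alpha>^m*\<beta>^m + \<beta>^(2*m))"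
      by (simp only: mult_ac)
    also have "\<dots> = (X - Y) * (X^2 + X*Y + Y^2)" unfolding closed x X_def Y_def by simp
    also have "\<dots> = X^3 - Y^3" by (simp add: power2_eq_square power3_eq_cube algebra_simps)
    also have "\<dots> = real_of_int (lucasU P Q (3*m)) * (\<alpha> - \<beta>)" using closed[of "3*m"] x by simp
    finally show ?thesis by (rule sym)
  qed
  then show ?thesis using ne by (metis mult_cancel_right)
qed

lemma sixi: "real_of_int (lucasU P Q (6*m)) * real_of_int (lucasU P Q m) =
   real_of_int (lucasU P Q (2*m)) * real_of_int (lucasU P Q (3*m)) * (\<alpha>^(2*m) - \<alpha>^m*\<beta>^m + \<beta>^(2*m))"
proof -
  define X where "X = \<alpha>^m"
  define Y where "Y = \<beta>^m"
  have x: "\<alpha>^(2*m) = X^2" "\<alpha>^(3*m) = X^3" "\<beta>^(2*m) = Y^2" "\<beta>^(3*m) = Y^3"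
     "\<alpha>^(6*m) = X^6" "\<beta>^(6*m) = Y^6"
    unfolding X_def Y_def by (simp_all add: pw)
  have c: "real_of_int (lucasU P Q k) * (\<alpha> - \<beta>) = \<alpha>^k - \<beta>^k" for k by (rule closed)
  have "real_of_int (lucasU P Q (6*m)) * real_of_int (lucasU P Q m) * ((\<alpha> - \<beta>)*(\<alpha> - \<beta>)) =
     real_of_int (lucasU P Q (2*m)) * real_of_int (lucasU P Q (3*m)) * (\<alpha>^(2*m) - \<alpha>^m*\<beta>^m + \<beta>^(2*m)) * ((\<alpha> - \<beta>)*(\<alpha> - \<beta>))"
  proof -
    have "real_of_int (lucasU P Q (6*m)) * real_of_int (lucasU P Q m) * ((\<alpha> - \<beta>)*(\<alpha> - \<beta>))
       = (real_of_int (lucasU P Q (6*m)) * (\<alpha> - \<beta>)) * (real_of_int (lucasU P Q m) * (\<alpha> - \<beta>))"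
      by (simp add: algebra_simps)
    also have "\<dots> = (X^6 - Y^6) * (X - Y)" unfolding c x X_def Y_def by simp
    also have "\<dots> = (X^2 - Y^2) * (X^3 - Y^3) * (X^2 - X*Y + Y^2)"
      by (simp add: power2_eq_square power3_eq_cube algebra_simps numeral_eq_Suc)
    also have "\<dots> = (real_of_int (lucasU P Q (2*m)) * (\<alpha> - \<beta>)) * (real_of_int (lucasU P Q (3*m)) * (\<alpha> - \<beta>)) * (\<alpha>^(2*m) - \<alpha>^m*\<beta>^m + \<beta>^(2*m))"
      unfolding c x X_def Y_def by simp
    also have "\<dots> = real_of_int (lucasU P Q (2*m)) * real_of_int (lucasU P Q (3*m)) * (\<alpha>^(2*m) - \<alpha>^m*\<beta>^m + \<beta>^(2*m)) * ((\<alpha> - \<beta>)*(\<alpha> - \<beta>))"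
      by (simp add: algebra_simps)
    finally show ?thesis .
  qed
  moreover have "(\<alpha> - \<beta>)*(\<alpha> - \<beta>) \<noteq> 0" using ne by simp
  ultimately show ?thesis by (metis mult_cancel_right)
qed

lemma bnd2: "m \<ge> 1 \<Longrightarrow> \<bar>\<alpha>^m + \<beta>^m\<bar> \<le> \<bar>\<alpha>\<bar>^(m+1)"
proof -
  assume m: "m \<ge> 1"
  have "\<bar>\<alpha>^m + \<beta>^m\<bar> \<le> \<bar>\<alpha>\<bar>^m + \<bar>\<beta>\<bar>^m" using abs_triangle_ineq[of "\<alpha>^m" "\<beta>^m"] by (simp add: power_abs)
  also have "\<dots> \<le> \<bar>\<alpha>\<bar>^(m+1)" using B1[OF gap _ m] by simp
  finally show ?thesis .
qed

lemma bnd3: "m \<ge> 1 \<Longrightarrow> \<bar>\<alpha>^(2*m) + c * (\<alpha>^m*\<beta>^m) + \<beta>^(2*m)\<bar> \<le> \<bar>\<alpha>\<bar>^(2*m+1)" if "\<bar>c\<bar> = 1"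
proof -
  assume m: "m \<ge> 1"
  have "\<bar>\<alpha>^(2*m) + c * (\<alpha>^m*\<beta>^m) + \<beta>^(2*m)\<bar> \<le> \<bar>\<alpha>^(2*m)\<bar> + \<bar>c * (\<alpha>^m*\<beta>^m)\<bar> + \<bar>\<beta>^(2*m)\<bar>"
    by (rule order_trans[OF abs_triangle_ineq add_right_mono[OF abs_triangle_ineq]])
  also have "\<dots> = \<bar>\<alpha>\<bar>^(2*m) + \<bar>\<alpha>\<bar>^m*\<bar>\<beta>\<bar>^m + \<bar>\<beta>\<bar>^(2*m)"
    using that by (simp add: power_abs abs_mult)
  also have "\<dots> \<le> \<bar>\<alpha>\<bar>^(2*m+1)" using B2[OF gap _ m] by simp
  finally show ?thesis .
qed

lemma ee_cases:
  "k mod 6 = 0 \<Longrightarrow> ee k = k div 3 + 1"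
  "k mod 6 \<noteq> 0 \<Longrightarrow> k mod 2 = 0 \<Longrightarrow> ee k = k div 2 + 1"
  "k mod 2 \<noteq> 0 \<Longrightarrow> k mod 3 = 0 \<Longrightarrow> ee k = 2*(k div 3) + 1"
  "k mod 2 \<noteq> 0 \<Longrightarrow> k mod 3 \<noteq> 0 \<Longrightarrow> ee k = k + 1"
  unfolding ee_def by auto

lemma upper_step:
  assumes k: "k \<ge> 2"
  shows "real_of_int (Lcm (lucasU P Q ` {1..k})) \<le> real_of_int (Lcm (lucasU P Q ` {1..k-1})) * \<bar>\<alpha>\<bar>^(ee k)"
proof -
  define L' where "L' = Lcm (lucasU P Q ` {1..k-1})"
  define g where "g = gcd (lucasU P Q k) L'"
  have set: "{1..k} = insert k {1..k-1}" using k by auto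
  have Lk: "Lcm (lucasU P Q ` {1..k}) = lcm (lucasU P Q k) L'" unfolding L'_def set by simp
  have L'0: "L' \<ge> 0" unfolding L'_def by simp
  have Uk0: "lucasU P Q k \<noteq> 0" using nz k by simp
  have g0: "g > 0" unfolding g_def using Uk0 by simp
  have prod: "\<bar>lucasU P Q k\<bar> * \<bar>L'\<bar> = g * lcm (lucasU P Q k) L'" unfolding g_def by (rule prod_gcd_lcm_int)
  have dvdL': "lucasU P Q j dvd L'" if "1 \<le> j" "j < k" for j
    unfolding L'_def using that by (intro dvd_Lcm) auto
  have dvdg: "d dvd g" if "d dvd lucasU P Q k" "d dvd L'" for d unfolding g_def using that by simp
  have gle: "\<bar>real_of_int (lucasU P Q j)\<bar> \<le> real_of_int g" if j12: "1 \<le> j" "j < k" and j3: "j dvd k" for j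
  proof -
    from j3 obtain q where q': "k = j*q" by (rule dvdE)
    have q: "k = q*j" using q' by (simp add: mult.commute)
    have "lucasU P Q j dvd lucasU P Q k" unfolding q by (rule lucas_dvd_mult)
    then have "lucasU P Q j dvd g" using dvdg dvdL' j12 by blast
    then have "\<bar>lucasU P Q j\<bar> \<le> \<bar>g\<bar>" using g0 by (intro dvd_imp_le_int) auto
    then show ?thesis using g0 by (simp del: of_int_abs add: of_int_abs[symmetric])
  qed
  have a0: "0 \<le> \<bar>\<alpha>\<bar>" by simp
  have key: "\<bar>real_of_int (lucasU P Q k)\<bar> \<le> real_of_int g * \<bar>\<alpha>\<bar>^(ee k)"
  proof (cases "k mod 6 = 0")
    case True
    then obtain m where km: "k = 6*m" by (auto elim!: dvdE simp: mod_eq_0_iff_dvd)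
    have m1: "m \<ge> 1" using k km by simp
    have ek: "ee k = 2*m+1" using ee_cases(1)[OF True] km by simp
    have d3: "lucasU P Q (3*m) dvd g"
      using dvdg[OF _ dvdL'[of "3*m"]] lucas_dvd_mult[of P Q "3*m" 2] km m1 by (simp add: mult.commute)
    have d2: "lucasU P Q (2*m) dvd g"
      using dvdg[OF _ dvdL'[of "2*m"]] lucas_dvd_mult[of P Q "2*m" 3] km m1 by (simp add: mult.commute)
    define g' where "g' = gcd (lucasU P Q (3*m)) (lucasU P Q (2*m))"
    define l' where "l' = lcm (lucasU P Q (3*m)) (lucasU P Q (2*m))"
    have "l' dvd g" unfolding l'_def using d3 d2 by simp
    then have l'g: "\<bar>l'\<bar> \<le> g" using g0 dvd_imp_le_int[of g l'] by simp
    have gm: "gcd (3*m) (2*m) = m" using gcd_mult_distrib_nat[of m 3 2] by (simp add: mult.commute)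
    have "g' dvd lucasU P Q (gcd (3*m) (2*m))" unfolding g'_def by (rule lucas_dvd_gcd[OF cop]) simp_all
    then have "g' dvd lucasU P Q m" using gm by simp
    then have g'm: "\<bar>g'\<bar> \<le> \<bar>lucasU P Q m\<bar>" using nz[OF m1] dvd_imp_le_int by blast
    have pr: "\<bar>lucasU P Q (3*m)\<bar> * \<bar>lucasU P Q (2*m)\<bar> = g' * l'" unfolding g'_def l'_def by (rule prod_gcd_lcm_int)
    have g'0: "g' \<ge> 0" "l' \<ge> 0" unfolding g'_def l'_def by simp_all
    have "\<bar>lucasU P Q (3*m)\<bar> * \<bar>lucasU P Q (2*m)\<bar> \<le> \<bar>lucasU P Q m\<bar> * g"
      unfolding pr using g'm l'g g'0 by (intro mult_mono) auto
    then have i1: "\<bar>real_of_int (lucasU P Q (3*m))\<bar> * \<bar>real_of_int (lucasU P Q (2*m))\<bar> \<le> \<bar>real_of_int (lucasU P Q m)\<bar> * real_of_int g"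
      by (metis of_int_abs of_int_le_iff of_int_mult)
    have ph: "\<bar>\<alpha>^(2*m) - \<alpha>^m*\<beta>^m + \<beta>^(2*m)\<bar> \<le> \<bar>\<alpha>\<bar>^(2*m+1)"
      using bnd3[of "-1" m] m1 by simp
    have "\<bar>real_of_int (lucasU P Q k)\<bar> * \<bar>real_of_int (lucasU P Q m)\<bar>
        = \<bar>real_of_int (lucasU P Q (3*m))\<bar> * \<bar>real_of_int (lucasU P Q (2*m))\<bar> * \<bar>\<alpha>^(2*m) - \<alpha>^m*\<beta>^m + \<beta>^(2*m)\<bar>"
      using sixi[of m] km by (simp add: abs_mult[symmetric] mult_ac)
    also have "\<dots> \<le> \<bar>real_of_int (lucasU P Q m)\<bar> * real_of_int g * \<bar>\<alpha>\<bar>^(2*m+1)"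
      by (rule mult_mono[OF i1 ph]) (use g0 in auto)
    finally have "\<bar>real_of_int (lucasU P Q k)\<bar> * \<bar>real_of_int (lucasU P Q m)\<bar> \<le> (real_of_int g * \<bar>\<alpha>\<bar>^(2*m+1)) * \<bar>real_of_int (lucasU P Q m)\<bar>"
      by (simp add: mult_ac)
    moreover have "\<bar>real_of_int (lucasU P Q m)\<bar> > 0" using nz[OF m1] by simp
    ultimately show ?thesis unfolding ek by (simp add: mult_le_cancel_right)
  next
    case F6: False
    show ?thesis
    proof (cases "k mod 2 = 0")
      case True
      then obtain m where km: "k = 2*m" by (auto elim!: dvdE simp: mod_eq_0_iff_dvd)
      have m1: "m \<ge> 1" using k km by simp
      have ek: "ee k = m+1" using ee_cases(2)[OF F6 True] km by simp
      have "\<bar>real_of_int (lucasU P Q k)\<bar> = \<bar>real_of_int (lucasU P Q m)\<bar> * \<bar>\<alpha>^m + \<beta>^m\<bar>"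
        using dbl[of m] km by (simp add: abs_mult)
      also have "\<dots> \<le> real_of_int g * \<bar>\<alpha>\<bar>^(m+1)"
        using gle[of m] bnd2[OF m1] km m1 by (intro mult_mono) auto
      finally show ?thesis unfolding ek .
    next
      case F2: False
      show ?thesis
      proof (cases "k mod 3 = 0")
        case True
        then obtain m where km: "k = 3*m" by (auto elim!: dvdE simp: mod_eq_0_iff_dvd)
        have m1: "m \<ge> 1" using k km by simp
        have ek: "ee k = 2*m+1" using ee_cases(3)[OF F2 True] km by simp
        have "\<bar>real_of_int (lucasU P Q k)\<bar> = \<bar>real_of_int (lucasU P Q m)\<bar> * \<bar>\<alpha>^(2*m) + \<alpha>^m*\<beta>^m + \<beta>^(2*m)\<bar>"
          using trp[of m] km by (simp add: abs_mult)
        also have "\<dots> \<le> real_of_int g * \<bar>\<alpha>\<bar>^(2*m+1)"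
          using gle[of m] bnd3[of 1 m] km m1 by (intro mult_mono) auto
        finally show ?thesis unfolding ek .
      next
        case False
        have ek: "ee k = k+1" using ee_cases(4)[OF F2 False] .
        have "\<bar>real_of_int (lucasU P Q k)\<bar> \<le> \<bar>\<alpha>\<bar>^(k+1)" using upper_u k by simp
        also have "\<dots> \<le> real_of_int g * \<bar>\<alpha>\<bar>^(k+1)"
        proof -
          have "1 \<le> real_of_int g" using g0 by simp
          from mult_right_mono[OF this, of "\<bar>\<alpha>\<bar>^(k+1)"] show ?thesis by simp
        qed
        finally show ?thesis unfolding ek .
      qed
    qed
  qed
  have "real_of_int (Lcm (lucasU P Q ` {1..k})) * real_of_int g = \<bar>real_of_int (lucasU P Q k)\<bar> * real_of_int L'"
    using prod L'0 unfolding Lk by (metis abs_of_nonneg mult.commute of_int_abs of_int_mult)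
  also have "\<dots> \<le> real_of_int g * \<bar>\<alpha>\<bar>^(ee k) * real_of_int L'" using key L'0 by (intro mult_right_mono) auto
  finally have "real_of_int (Lcm (lucasU P Q ` {1..k})) * real_of_int g \<le> (real_of_int L' * \<bar>\<alpha>\<bar>^(ee k)) * real_of_int g"
    by (simp add: mult_ac)
  then show ?thesis unfolding L'_def using g0 by (simp add: mult_le_cancel_right)
qed

lemma upper_all: "n \<ge> 1 \<Longrightarrow> real_of_int (Lcm (lucasU P Q ` {1..n})) \<le> \<bar>\<alpha>\<bar>^(EE n)"
proof (induction n)
  case 0 then show ?case by simp
next
  case (Suc n)
  show ?case
  proof (cases "n = 0")
    case True then show ?thesis by simp
  next
    case False
    have "real_of_int (Lcm (lucasU P Q ` {1..Suc n})) \<le> real_of_int (Lcm (lucasU P Q ` {1..n})) * \<bar>\<alpha>\<bar>^(ee (Suc n))"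
      using upper_step[of "Suc n"] False by simp
    also have "\<dots> \<le> \<bar>\<alpha>\<bar>^(EE n) * \<bar>\<alpha>\<bar>^(ee (Suc n))"
      using Suc.IH False by (intro mult_right_mono) auto
    also have "\<dots> = \<bar>\<alpha>\<bar>^(EE (Suc n))" using False by (simp add: power_add)
    finally show ?thesis .
  qed
qed

lemma lower_all:
  assumes n: "n \<ge> 1"
  shows "\<bar>\<alpha>\<bar>^((n - n div 2 - 1) * (n div 2)) \<le> real_of_int (Lcm (lucasU P Q ` {1..n}))"
proof -
  define k where "k = n div 2"
  define s where "s = n - k"
  have s1: "s \<ge> 1" and sk: "s + k = n" unfolding s_def k_def using n by auto
  define A where "A = (\<Prod>i\<in>{1..k}. lucasU P Q (s+i))"
  define B where "B = (\<Prod>i\<in>{1..k}. lucasU P Q i)"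
  define L where "L = Lcm (lucasU P Q ` {1..n})"
  have dv: "A dvd L * B" unfolding A_def B_def L_def using lucas_binom_dvd[OF cop nz, where k=k and s=s] sk by simp
  have B0: "B \<noteq> 0" unfolding B_def using nz by (simp add: prod_zero_iff)
  have L0: "L \<noteq> 0" unfolding L_def using nz by (subst Lcm_0_iff) auto
  have Lp: "L \<ge> 0" unfolding L_def by simp
  have "\<bar>A\<bar> \<le> \<bar>L * B\<bar>" using dv L0 B0 by (intro dvd_imp_le_int) auto
  then have AL: "\<bar>real_of_int A\<bar> \<le> real_of_int L * \<bar>real_of_int B\<bar>"
    using Lp by (metis abs_mult abs_of_nonneg of_int_abs of_int_le_iff of_int_mult)
  have "(\<Prod>i\<in>{1..k}. \<bar>\<alpha>\<bar>^(s-1) * \<bar>real_of_int (lucasU P Q i)\<bar>) = (\<bar>\<alpha>\<bar>^(s-1))^k * (\<Prod>i\<in>{1..k}. \<bar>real_of_int (lucasU P Q i)\<bar>)"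
    by (simp add: prod.distrib)
  moreover have "(\<Prod>i\<in>{1..k}. \<bar>real_of_int (lucasU P Q i)\<bar>) = \<bar>real_of_int B\<bar>" unfolding B_def by (simp add: abs_prod)
  moreover have "(\<bar>\<alpha>\<bar>^(s-1))^k = \<bar>\<alpha>\<bar>^((s-1)*k)" by (simp add: power_mult)
  ultimately have "\<bar>\<alpha>\<bar>^((s-1)*k) * \<bar>real_of_int B\<bar> = (\<Prod>i\<in>{1..k}. \<bar>\<alpha>\<bar>^(s-1) * \<bar>real_of_int (lucasU P Q i)\<bar>)"
    by simp
  also have "\<dots> \<le> (\<Prod>i\<in>{1..k}. \<bar>real_of_int (lucasU P Q (s+i))\<bar>)"
  proof (rule prod_mono)
    fix i assume "i \<in> {1..k}"
    then show "0 \<le> \<bar>\<alpha>\<bar>^(s-1) * \<bar>real_of_int (lucasU P Q i)\<bar> \<and> \<bar>\<alpha>\<bar>^(s-1) * \<bar>real_of_int (lucasU P Q i)\<bar> \<le> \<bar>real_of_int (lucasU P Q (s+i))\<bar>"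
      using lower_ratio[of i s] s1 by auto
  qed
  also have "\<dots> = \<bar>real_of_int A\<bar>" unfolding A_def by (simp add: abs_prod)
  also have "\<dots> \<le> real_of_int L * \<bar>real_of_int B\<bar>" by (rule AL)
  finally have "\<bar>\<alpha>\<bar>^((s-1)*k) \<le> real_of_int L" using B0 by (simp add: mult_le_cancel_right)
  then show ?thesis unfolding L_def s_def k_def .
qed

end

theorem theorem2:
  fixes P Q :: int and \<alpha> :: real and n :: nat
  assumes "P \<noteq> 0" and "Q \<noteq> 0" and "coprime P Q"
    and "P^2 - 4*Q > 0"
    and "\<alpha>^2 - of_int P * \<alpha> + of_int Q = 0"
    and "\<And>x::real. x^2 - of_int P * x + of_int Q = 0 \<Longrightarrow> \<bar>x\<bar> \<le> \<bar>\<alpha>\<bar>"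
    and "n \<ge> 1"
  shows "\<bar>\<alpha>\<bar> powr ((real n)^2/4 - real n/2 - 1) \<le> real_of_int (Lcm (lucasU P Q ` {1..n}))
       \<and> real_of_int (Lcm (lucasU P Q ` {1..n})) \<le> \<bar>\<alpha>\<bar> powr ((real n)^2/3 + 7*real n/3 - 8/3)"
proof -
  interpret lucas_setup P Q \<alpha> using assms(1-6) by unfold_locales
  have n: "n \<ge> 1" by fact
  have a1': "1 \<le> \<bar>\<alpha>\<bar>" using a1 by simp
  have apos: "0 < \<bar>\<alpha>\<bar>" using a1 by simp
  define k where "k = n div 2"
  have ex: "(real n)^2/4 - real n/2 - 1 \<le> real ((n - n div 2 - 1) * (n div 2))"
  proof (cases "even n")
    case True
    then have nk: "n = 2*k" unfolding k_def by simp
    then have "k \<ge> 1" using n by simp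
    then have "real ((n - n div 2 - 1) * (n div 2)) = (real k - 1) * real k"
      using nk unfolding k_def[symmetric] by (simp add: of_nat_diff)
    then show ?thesis using nk by (simp add: power2_eq_square algebra_simps)
  next
    case False
    then have nk: "n = 2*k+1" unfolding k_def by presburger
    then have "real ((n - n div 2 - 1) * (n div 2)) = real k * real k"
      unfolding k_def[symmetric] by simp
    moreover have "real n = 2 * real k + 1" using nk by simp
    ultimately show ?thesis by (simp add: power2_eq_square field_simps)
  qed
  have low: "\<bar>\<alpha>\<bar> powr ((real n)^2/4 - real n/2 - 1) \<le> real_of_int (Lcm (lucasU P Q ` {1..n}))"
  proof -
    have "\<bar>\<alpha>\<bar> powr ((real n)^2/4 - real n/2 - 1) \<le> \<bar>\<alpha>\<bar> powr real ((n - n div 2 - 1) * (n div 2))"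
      by (rule powr_mono[OF ex a1'])
    also have "\<dots> = \<bar>\<alpha>\<bar>^((n - n div 2 - 1) * (n div 2))" using apos by (rule powr_realpow)
    also have "\<dots> \<le> real_of_int (Lcm (lucasU P Q ` {1..n}))" by (rule lower_all[OF n])
    finally show ?thesis .
  qed
  have ex2: "real (EE n) \<le> (real n)^2/3 + 7*real n/3 - 8/3"
  proof -
    have "3 * EE n + 8 \<le> n^2 + 7*n" by (rule EE_bound[OF n])
    then have "real (3 * EE n + 8) \<le> real (n^2 + 7*n)" by (simp only: of_nat_le_iff)
    then show ?thesis by simp
  qed
  have up: "real_of_int (Lcm (lucasU P Q ` {1..n})) \<le> \<bar>\<alpha>\<bar> powr ((real n)^2/3 + 7*real n/3 - 8/3)"
  proof -
    have "real_of_int (Lcm (lucasU P Q ` {1..n})) \<le> \<bar>\<alpha>\<bar>^(EE n)" by (rule upper_all[OF n])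
    also have "\<dots> = \<bar>\<alpha>\<bar> powr real (EE n)" using apos by (rule powr_realpow[symmetric])
    also have "\<dots> \<le> \<bar>\<alpha>\<bar> powr ((real n)^2/3 + 7*real n/3 - 8/3)" by (rule powr_mono[OF ex2 a1'])
    finally show ?thesis .
  qed
  show ?thesis using low up by blast
qed


end
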